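(* For all $m,n\ge1$, $$F_{m+1}(x,y,q)F_{n+1}(xq^m,yq^m,q)=xq^mF_{m+n+1}(x,y,q)+y^2q^{2m-1}F_{m-1}(x,y,q)F_{n-1}(xq^{m+2},yq^{m+2},q).$$
   Context: $\Pi_n(13/2,123)$ is the set of layered matchings of $[n]$: set partitions whose blocks are consecutive intervals $[1,i_1]/\dots/[i_{k-1}+1,n]$, each of size $1$ or $2$. $\Pi_0(13/2,123)$ consists of the empty partition. For $\pi=B_1/\dots/B_k$ with $\min B_1<\dots<\min B_k$, $rb(\pi)$ is the number of pairs $(b,B_j)$ with $b\in B_i$, $j>i$, $\max B_j>b$. Let $s(\pi)$ and $d(\pi)$ be the numbers of blocks of size $1$ and $2$. Define $F_n(x,y,q)=\sum_{\pi\in\Pi_n(13/2,123)}x^{s(\pi)}y^{d(\pi)}q^{rb(\pi)}$, so $F_0=1$ and $F_1=x$. $F_n(xq^a,yq^a,q)$ denotes the substitution $x\mapsto xq^a$, $y\mapsto yq^a$. *)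

theory Defs
  imports Main
begin

text \<open>Blocks of the layered partition determined by a composition cs (parts 1 or 2),
  listed in order of their minima; s is the number of elements already used.\<close>
fun blocks_from :: "nat \<Rightarrow> nat list \<Rightarrow> nat set list" where
  "blocks_from s [] = []"
| "blocks_from s (c # cs) = {s+1..s+c} # blocks_from (s+c) cs"

text \<open>Pi_n(13/2,123): layered matchings of [n], each given as the list B_1,...,B_k of
  its blocks ordered by increasing minimum.\<close>
definition layered_matchings :: "nat \<Rightarrow> nat set list set" where
  "layered_matchings n =
     {blocks_from 0 cs | cs. set cs \<subseteq> {1,2} \<and> sum_list cs = n}"

definition rb :: "nat set list \<Rightarrow> nat" where
  "rb Bs = card {(b, j). \<exists>i<j. j < length Bs \<and> b \<in> Bs ! i \<and> b < Max (Bs ! j)}"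

definition sblocks :: "nat set list \<Rightarrow> nat" where
  "sblocks Bs = length (filter (\<lambda>B. card B = 1) Bs)"

definition dblocks :: "nat set list \<Rightarrow> nat" where
  "dblocks Bs = length (filter (\<lambda>B. card B = 2) Bs)"

definition F :: "nat \<Rightarrow> 'a::comm_semiring_1 \<Rightarrow> 'a \<Rightarrow> 'a \<Rightarrow> 'a" where
  "F n x y q = (\<Sum>Bs\<in>layered_matchings n. x ^ sblocks Bs * y ^ dblocks Bs * q ^ rb Bs)"

end

theory Submission imports Defs begin

fun R :: "nat list \<Rightarrow> nat" where
  "R [] = 0" | "R (c # cs) = c * length cs + R cs"

lemma bf_len[simp]: "length (blocks_from s cs) = length cs"
  by (induction cs arbitrary: s) auto

lemma bf_card: "map card (blocks_from s cs) = cs"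
  by (induction cs arbitrary: s) auto

lemma bf_bounds: "0 \<notin> set cs \<Longrightarrow> j < length cs \<Longrightarrow>
   (\<forall>b\<in>blocks_from s cs ! j. s < b) \<and> s < Max (blocks_from s cs ! j)"
proof (induction cs arbitrary: s j)
  case Nil then show ?case by simp
next
  case (Cons c cs)
  show ?case
  proof (cases j)
    case 0
    have "s + c \<le> Max {Suc s..s+c}" using Cons.prems by (intro Max_ge) auto
    moreover have "0 < c" using Cons.prems by simp
    ultimately have "s < Max {Suc s..s+c}" by linarith
    with 0 Cons.prems show ?thesis by auto
  next
    case (Suc j')
    with Cons.prems Cons.IH[where s="s+c" and j=j'] show ?thesis by auto
  qed
qed

lemma rb_cons: "rb (B # Bs) = card ((\<lambda>(b,j). (b, Suc j)) ` {(b, j). \<exists>i<j. j < length Bs \<and> b \<in> Bs ! i \<and> b < Max (Bs ! j)}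
   \<union> {(b, Suc j) | b j. b \<in> B \<and> j < length Bs \<and> b < Max (Bs!j)})"
proof -
  have "{(b, j). \<exists>i<j. j < length (B#Bs) \<and> b \<in> (B#Bs) ! i \<and> b < Max ((B#Bs) ! j)}
     = (\<lambda>(b,j). (b, Suc j)) ` {(b, j). \<exists>i<j. j < length Bs \<and> b \<in> Bs ! i \<and> b < Max (Bs ! j)}
   \<union> {(b, Suc j) | b j. b \<in> B \<and> j < length Bs \<and> b < Max (Bs!j)}"
  proof (rule set_eqI, clarify)
    fix b j
    show "((b, j) \<in> {(b, j). \<exists>i<j. j < length (B#Bs) \<and> b \<in> (B#Bs) ! i \<and> b < Max ((B#Bs) ! j)}) =
      ((b, j) \<in> (\<lambda>(b,j). (b, Suc j)) ` {(b, j). \<exists>i<j. j < length Bs \<and> b \<in> Bs ! i \<and> b < Max (Bs ! j)}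
   \<union> {(b, Suc j) | b j. b \<in> B \<and> j < length Bs \<and> b < Max (Bs!j)})"
    proof (cases j)
      case 0 then show ?thesis by auto
    next
      case (Suc j')
      have "(\<exists>i<Suc j'. P i) = (P 0 \<or> (\<exists>i<j'. P (Suc i)))" for P
        by (metis less_Suc_eq_0_disj Suc_less_eq zero_less_Suc)
      then show ?thesis using Suc by (auto simp: image_iff)
    qed
  qed
  then show ?thesis unfolding rb_def by simp
qed

lemma rb_bf: "0 \<notin> set cs \<Longrightarrow> rb (blocks_from s cs) = R cs"
proof (induction cs arbitrary: s)
  case Nil then show ?case by (simp add: rb_def)
next
  case (Cons c cs)
  let ?Bs = "blocks_from (s+c) cs"
  let ?P = "{(b, j). \<exists>i<j. j < length ?Bs \<and> b \<in> ?Bs ! i \<and> b < Max (?Bs ! j)}"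
  have IH: "card ?P = R cs" using Cons by (simp add: rb_def)
  have bd: "\<And>j. j < length cs \<Longrightarrow> (\<forall>b\<in>?Bs ! j. s+c < b) \<and> s+c < Max (?Bs ! j)"
  proof -
    fix j assume a: "j < length cs"
    have b: "0 \<notin> set cs" using Cons.prems by simp
    from b a show "(\<forall>b\<in>?Bs ! j. s+c < b) \<and> s+c < Max (?Bs ! j)" by (rule bf_bounds)
  qed
  have E2: "{(b, Suc j) | b j. b \<in> {s+1..s+c} \<and> j < length ?Bs \<and> b < Max (?Bs!j)}
      = {s+1..s+c} \<times> (Suc ` {..<length cs})"
  proof (rule set_eqI, clarify)
    fix b j
    show "((b, j) \<in> {(b, Suc j) | b j. b \<in> {s+1..s+c} \<and> j < length ?Bs \<and> b < Max (?Bs!j)}) = ((b,j) \<in> {s+1..s+c} \<times> (Suc ` {..<length cs}))"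
    proof
      assume "(b, j) \<in> {s+1..s+c} \<times> (Suc ` {..<length cs})"
      then obtain j' where "j = Suc j'" "j' < length cs" "b \<in> {s+1..s+c}" by auto
      moreover have "b < Max (?Bs!j')" using bd[OF \<open>j' < length cs\<close>] \<open>b \<in> {s+1..s+c}\<close> by auto
      ultimately show "(b, j) \<in> {(b, Suc j) | b j. b \<in> {s+1..s+c} \<and> j < length ?Bs \<and> b < Max (?Bs!j)}" by auto
    qed auto
  qed
  have disj: "(\<lambda>(b,j). (b, Suc j)) ` ?P \<inter> ({s+1..s+c} \<times> (Suc ` {..<length cs})) = {}"
  proof -
    { fix b j i assume "i < j" "j < length cs" "b \<in> ?Bs ! i"
      then have "s + c < b" using bd[of i] by auto }
    then show ?thesis by fastforce
  qed
  have fin: "finite ?P"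
  proof (rule finite_subset)
    show "?P \<subseteq> (\<Union>i<length cs. ?Bs ! i) \<times> {..<length cs}" by (auto, meson lessThan_iff order.strict_trans)
    show "finite ((\<Union>i<length cs. ?Bs ! i) \<times> {..<length cs})"
    proof -
      have "\<And>i. i < length cs \<Longrightarrow> finite (?Bs ! i)"
      proof -
        fix i assume "i < length cs"
        hence "card (?Bs ! i) = cs ! i" using bf_card[of "s+c" cs] by (metis bf_len nth_map)
        moreover have "cs ! i > 0" using Cons.prems \<open>i < length cs\<close> by (metis in_set_conv_nth list.set_intros(2) neq0_conv)
        ultimately show "finite (?Bs ! i)" by (metis card_ge_0_finite)
      qed
      then show ?thesis by auto
    qed
  qed
  have inj: "inj_on (\<lambda>(b,j). (b, Suc j)) ?P" by (auto simp: inj_on_def)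
  have "rb (blocks_from s (c#cs)) = card ((\<lambda>(b,j). (b, Suc j)) ` ?P \<union> ({s+1..s+c} \<times> (Suc ` {..<length cs})))"
    using rb_cons E2 by simp
  also have "\<dots> = card ?P + c * length cs"
    using disj fin inj by (simp add: card_Un_disjoint card_image card_cartesian_product)
  finally show ?case using IH by simp
qed


definition C :: "nat \<Rightarrow> nat list set" where
  "C n = {cs. set cs \<subseteq> {1,2} \<and> sum_list cs = n}"

definition wt :: "'a::comm_semiring_1 \<Rightarrow> 'a \<Rightarrow> 'a \<Rightarrow> nat list \<Rightarrow> 'a" where
  "wt x y q cs = x ^ length (filter (\<lambda>c. c=1) cs) * y ^ length (filter (\<lambda>c. c=2) cs) * q ^ R cs"

lemma len_le_sum: "0 \<notin> set cs \<Longrightarrow> length cs \<le> sum_list (cs::nat list)"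
  by (induction cs) (auto simp: Suc_le_eq)

lemma finite_C: "finite (C n)"
proof (rule finite_subset)
  show "C n \<subseteq> {xs. set xs \<subseteq> {1,2} \<and> length xs \<le> n}"
    unfolding C_def using len_le_sum by fastforce
  show "finite {xs. set xs \<subseteq> {1::nat,2} \<and> length xs \<le> n}"
    by (rule finite_lists_length_le) simp
qed

lemma count12: "set cs \<subseteq> {1,2} \<Longrightarrow>
  length (filter (\<lambda>c. c=1) cs) + length (filter (\<lambda>c. c=(2::nat)) cs) = length cs"
  by (induction cs) auto

lemma sblocks_bf: "sblocks (blocks_from s cs) = length (filter (\<lambda>c. c=1) cs)"
proof -
  have "sblocks (blocks_from s cs) = length (filter (\<lambda>c. c=1) (map card (blocks_from s cs)))"
    by (simp add: sblocks_def filter_map comp_def)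
  then show ?thesis by (simp add: bf_card)
qed

lemma dblocks_bf: "dblocks (blocks_from s cs) = length (filter (\<lambda>c. c=2) cs)"
proof -
  have "dblocks (blocks_from s cs) = length (filter (\<lambda>c. c=2) (map card (blocks_from s cs)))"
    by (simp add: dblocks_def filter_map comp_def)
  then show ?thesis by (simp add: bf_card)
qed

lemma F_C: "F n x y q = (\<Sum>cs\<in>C n. wt x y q cs)"
proof -
  have LM: "layered_matchings n = blocks_from 0 ` C n"
    unfolding layered_matchings_def C_def by blast
  have inj: "inj_on (blocks_from 0) (C n)"
    by (metis bf_card inj_onI)
  have "F n x y q = (\<Sum>cs\<in>C n. x ^ sblocks (blocks_from 0 cs) * y ^ dblocks (blocks_from 0 cs) * q ^ rb (blocks_from 0 cs))"
    unfolding F_def LM by (simp add: sum.reindex[OF inj])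
  also have "\<dots> = (\<Sum>cs\<in>C n. wt x y q cs)"
  proof (rule sum.cong)
    fix cs assume "cs \<in> C n"
    then have "0 \<notin> set cs" unfolding C_def by auto
    then show "x ^ sblocks (blocks_from 0 cs) * y ^ dblocks (blocks_from 0 cs) * q ^ rb (blocks_from 0 cs) = wt x y q cs"
      by (simp add: wt_def sblocks_bf dblocks_bf rb_bf)
  qed simp
  finally show ?thesis .
qed

lemma sum0: "set cs \<subseteq> {1,2} \<Longrightarrow> sum_list cs = (0::nat) \<Longrightarrow> cs = []"
  by (cases cs) auto

lemma C0: "C 0 = {[]}"
  unfolding C_def using sum0 by auto

lemma C1: "C (Suc 0) = {[1]}"
proof -
  have "cs \<in> C (Suc 0) \<longleftrightarrow> cs = [1]" for cs
    unfolding C_def using sum0 by (cases cs) auto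
  then show ?thesis by auto
qed

lemma CSS: "C (Suc (Suc n)) = Cons 1 ` C (Suc n) \<union> Cons 2 ` C n"
proof -
  have "cs \<in> C (Suc (Suc n)) \<longleftrightarrow> cs \<in> Cons 1 ` C (Suc n) \<union> Cons 2 ` C n" for cs
    unfolding C_def by (cases cs) auto
  then show ?thesis by blast
qed

lemma wt1: "set cs \<subseteq> {1,2} \<Longrightarrow> wt x y q (1#cs) = x * wt (x*q) (y*q) q cs"
proof -
  assume h: "set cs \<subseteq> {1,2}"
  let ?a = "length (filter (\<lambda>c. c=1) cs)" and ?b = "length (filter (\<lambda>c. c=(2::nat)) cs)"
  have l: "length cs = ?a + ?b" using count12[OF h] by simp
  show ?thesis unfolding wt_def using l
    by (simp add: power_mult_distrib power_add algebra_simps)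
qed

lemma wt2: "set cs \<subseteq> {1,2} \<Longrightarrow> wt x y q (2#cs) = y * wt (x*q^2) (y*q^2) q cs"
proof -
  assume h: "set cs \<subseteq> {1,2}"
  let ?a = "length (filter (\<lambda>c. c=1) cs)" and ?b = "length (filter (\<lambda>c. c=(2::nat)) cs)"
  have l: "length cs = ?a + ?b" using count12[OF h] by simp
  show ?thesis unfolding wt_def using l
    by (simp add: power_mult_distrib power_add algebra_simps flip: power_mult)
qed

lemma F0: "F 0 x y q = 1"
  by (simp add: F_C C0 wt_def)

lemma F1: "F (Suc 0) x y q = x"
  by (simp add: F_C C1 wt_def)

lemma Frec: "F (Suc (Suc n)) x y q = x * F (Suc n) (x*q) (y*q) q + y * F n (x*q^2) (y*q^2) q"
proof -
  have d: "Cons 1 ` C (Suc n) \<inter> Cons 2 ` C n = {}" by auto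
  have "F (Suc (Suc n)) x y q = (\<Sum>cs\<in>Cons 1 ` C (Suc n). wt x y q cs) + (\<Sum>cs\<in>Cons 2 ` C n. wt x y q cs)"
    unfolding F_C CSS by (rule sum.union_disjoint) (auto simp: finite_C d)
  also have "(\<Sum>cs\<in>Cons 1 ` C (Suc n). wt x y q cs) = (\<Sum>cs\<in>C (Suc n). wt x y q (1#cs))"
    by (simp add: sum.reindex)
  also have "\<dots> = x * F (Suc n) (x*q) (y*q) q"
    unfolding F_C sum_distrib_left
  proof (rule sum.cong)
    fix cs assume "cs \<in> C (Suc n)"
    then show "wt x y q (1#cs) = x * wt (x*q) (y*q) q cs" by (intro wt1) (simp add: C_def)
  qed simp
  also have "(\<Sum>cs\<in>Cons 2 ` C n. wt x y q cs) = (\<Sum>cs\<in>C n. wt x y q (2#cs))"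
    by (simp add: sum.reindex)
  also have "\<dots> = y * F n (x*q^2) (y*q^2) q"
    unfolding F_C sum_distrib_left
  proof (rule sum.cong)
    fix cs assume "cs \<in> C n"
    then show "wt x y q (2#cs) = y * wt (x*q^2) (y*q^2) q cs" by (intro wt2) (simp add: C_def)
  qed simp
  finally show ?thesis .
qed


definition G :: "'a::comm_semiring_1 \<Rightarrow> 'a \<Rightarrow> 'a \<Rightarrow> nat \<Rightarrow> nat \<Rightarrow> 'a" where
  "G x y q n a = F n (x*q^a) (y*q^a) q"

lemma G0: "G x y q 0 a = 1" by (simp add: G_def F0)
lemma G1: "G x y q (Suc 0) a = x*q^a" by (simp add: G_def F1)

lemma Gr: "G x y q (Suc (Suc n)) a = x*q^a * G x y q (Suc n) (Suc a) + y*q^a * G x y q n (Suc (Suc a))"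
proof -
  have e1: "x*q^a*q = x*q^(Suc a)" "y*q^a*q = y*q^(Suc a)"
    by (simp_all add: algebra_simps)
  have e2: "x*q^a*q^2 = x*q^(Suc (Suc a))" "y*q^a*q^2 = y*q^(Suc (Suc a))"
    by (simp_all add: algebra_simps power2_eq_square)
  show ?thesis unfolding G_def Frec e1 e2 ..
qed

lemma S: "G x y q (m+n+2) a = G x y q (m+1) a * G x y q (n+1) (a+m+1)
     + y*q^a*q^m * G x y q m a * G x y q n (a+m+2)"
proof (induction m arbitrary: a rule: less_induct)
  case (less m)
  show ?case
  proof (cases m)
    case 0
    then show ?thesis using Gr[of x y q n a] by (simp add: G0 G1 numeral_2_eq_2)
  next
    case (Suc k)
    note mk = Suc
    show ?thesis
    proof (cases k)
      case 0
      have h1: "G x y q (n+2) (a+1) = G x y q 1 (a+1) * G x y q (n+1) (a+2)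
         + y*q^(a+1) * G x y q 0 (a+1) * G x y q n (a+3)"
        using less.IH[of 0 "a+1"] mk 0 by (simp add: numeral_2_eq_2 numeral_3_eq_3)
      have L: "G x y q (m+n+2) a = x*q^a * G x y q (n+2) (a+1) + y*q^a * G x y q (n+1) (a+2)"
        using Gr[of x y q "n+1" a] mk 0 by (simp add: numeral_2_eq_2)
      have g2: "G x y q 2 a = x*q^a * G x y q 1 (a+1) + y*q^a"
        using Gr[of x y q 0 a] by (simp add: G0 numeral_2_eq_2)
      show ?thesis unfolding L h1 using mk 0 g2
        by (simp add: G0 G1 algebra_simps power_add numeral_2_eq_2 numeral_3_eq_3)
    next
      case (Suc j)
      have ih1: "G x y q (k+n+2) (a+1) = G x y q (k+1) (a+1) * G x y q (n+1) (a+1+k+1)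
         + y*q^(a+1)*q^k * G x y q k (a+1) * G x y q n (a+1+k+2)"
        using less.IH[of k "a+1"] mk by simp
      have ih2: "G x y q (j+n+2) (a+2) = G x y q (j+1) (a+2) * G x y q (n+1) (a+2+j+1)
         + y*q^(a+2)*q^j * G x y q j (a+2) * G x y q n (a+2+j+2)"
        using less.IH[of j "a+2"] mk Suc by simp
      have L: "G x y q (m+n+2) a = x*q^a * G x y q (k+n+2) (a+1) + y*q^a * G x y q (j+n+2) (a+2)"
        using Gr[of x y q "k+n+1" a] mk Suc by (simp add: numeral_2_eq_2)
      have r1: "G x y q (m+1) a = x*q^a * G x y q (k+1) (a+1) + y*q^a * G x y q (j+1) (a+2)"
        using Gr[of x y q "j+1" a] mk Suc by (simp add: numeral_2_eq_2)
      have r2: "G x y q m a = x*q^a * G x y q (j+1) (a+1) + y*q^a * G x y q j (a+2)"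
        using Gr[of x y q j a] mk Suc by (simp add: numeral_2_eq_2)
      have kk: "k = j+1" using Suc by simp
      show ?thesis unfolding L ih1 ih2 r1 r2 using mk kk
        by (simp add: algebra_simps power_add numeral_2_eq_2 numeral_3_eq_3)
    qed
  qed
qed


theorem theorem4p4:
  fixes x y q :: "'a::comm_semiring_1" and m n :: nat
  assumes "m \<ge> 1" and "n \<ge> 1"
  shows "F (m+1) x y q * F (n+1) (x * q^m) (y * q^m) q =
         x * q^m * F (m+n+1) x y q
         + y^2 * q^(2*m-1) * F (m-1) x y q * F (n-1) (x * q^(m+2)) (y * q^(m+2)) q"
proof -
  obtain m' where m: "m = Suc m'" using assms(1) by (cases m) auto
  obtain n' where n: "n = Suc n'" using assms(2) by (cases n) auto
  have GF: "F k x y q = G x y q k 0" for k by (simp add: G_def)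
  have GF2: "F k (x*q^a) (y*q^a) q = G x y q k a" for k a by (simp add: G_def)
  have A: "G x y q (n'+2) (m'+1) = x*q^(m'+1) * G x y q (n'+1) (m'+2) + y*q^(m'+1) * G x y q n' (m'+3)"
    using Gr[of x y q n' "m'+1"] by (simp add: numeral_2_eq_2 numeral_3_eq_3)
  have B: "G x y q (m'+n'+3) 0 = G x y q (m'+2) 0 * G x y q (n'+1) (m'+2) + y*q^(m'+1) * G x y q (m'+1) 0 * G x y q n' (m'+3)"
    using S[of x y q "m'+1" n' 0] by (simp add: numeral_2_eq_2 numeral_3_eq_3 algebra_simps)
  have D: "G x y q (m'+2) 0 = G x y q (m'+1) 0 * (x*q^(m'+1)) + y*q^m' * G x y q m' 0"
    using S[of x y q m' 0 0] by (simp add: G0 G1 numeral_2_eq_2 algebra_simps)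
  have e: "2*m - 1 = 2*m'+1" using m by simp
  have lhs: "F (m+1) x y q * F (n+1) (x * q^m) (y * q^m) q = G x y q (m'+2) 0 * G x y q (n'+2) (m'+1)"
    unfolding GF GF2 m n by (simp add: numeral_2_eq_2)
  have rhs: "x * q^m * F (m+n+1) x y q
         + y^2 * q^(2*m-1) * F (m-1) x y q * F (n-1) (x * q^(m+2)) (y * q^(m+2)) q
       = x * q^(m'+1) * G x y q (m'+n'+3) 0 + y^2 * q^(2*m'+1) * G x y q m' 0 * G x y q n' (m'+3)"
    unfolding GF GF2 e m n by (simp add: numeral_2_eq_2 numeral_3_eq_3)
  show ?thesis unfolding lhs rhs A B
    apply (subst (1 2) D)
    by (simp add: algebra_simps power_add power2_eq_square mult_2 mult_2_right)
qed

end
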